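(* Let $S$ be a formula. The condition $\langle J+ss\rangle\subset D\,\mathbb{C}[D]\otimes S$ is equivalent to the conjunction of: (a) $\langle\mathrm{Jacobi}\rangle\subset D\,\mathbb{C}[D]\otimes S$, and (b) $u_nv+\varepsilon_{u,v}(-1)^nv_nu\in D\,\mathbb{C}[D]\otimes S$ for all homogeneous $u,v\in S$ and $n\ge0$. If these conditions hold, then $S$ is $(J+ss)$-injective.
   Context: All spaces over $\mathbb{C}$; $\mathbb{N}=\{0,1,2,\dots\}$; $\varepsilon_{u,v}=(-1)^{|u||v|}$. A formula is a $\mathbb{Z}_2$-graded space $S$ with parity-preserving linear maps $F_n:S\otimes S\to\mathbb{C}[D]\otimes S$ ($n\in\mathbb{N}$; $\mathbb{C}[D]$ even) with $F_n(u,v)=0$ for $n$ large; write $u_nv=F_n(u,v)$, identify $S=1\otimes S$, $D(D^k\otimes u)=D^{k+1}\otimes u$. The products extend uniquely to bilinear products $A_nB$ ($n\in\mathbb{N}$) on $\mathbb{C}[D]\otimes S$ with $(DA)_nB=-nA_{n-1}B$ and $D(A_nB)=(DA)_nB+A_n(DB)$; explicitly $\sum_{n\ge0}(P(D)u)_n(Q(D)v)z^{-n-1}=P(\frac{d}{dz})Q(D-\frac{d}{dz})\sum_{n\ge0}(u_nv)z^{-n-1}$. A two-sided ideal of $\mathbb{C}[D]\otimes S$ is a subspace $I$ with $A_nI\subset I$ and $I_nA\subset I$ for all $A$ and $n\ge0$. $\langle\mathrm{Jacobi}\rangle$ is the two-sided ideal generated by all $u_m(v_nw)-\varepsilon_{u,v}v_n(u_mw)-\sum_{i\ge0}\binom{m}{i}(u_iv)_{n+m-i}w$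 ($u,v,w\in\mathbb{C}[D]\otimes S$ homogeneous, $m,n\in\mathbb{N}$). $\langle J+ss\rangle$ is the two-sided ideal generated by these elements together with all $v_nw+\varepsilon_{v,w}\sum_{k\ge0}(-1)^{n+k}\frac{D^k}{k!}w_{n+k}v$ ($v,w$ homogeneous, $n\in\mathbb{N}$). $S$ is $(J+ss)$-injective if $S\cap\langle J+ss\rangle=0$, i.e. the composite $S\hookrightarrow\mathbb{C}[D]\otimes S\to(\mathbb{C}[D]\otimes S)/\langle J+ss\rangle$ is injective. *)

theory Defs
  imports Complex_Main "HOL-Library.Groups_Big_Fun" "HOL-Library.Function_Algebras"
begin

(* S is modelled as a complex vector space on a type 'a (scalar multiplication sc),
   Z2-graded by subspaces S0 (even) and S1 (odd).
   C[D] (x) S is modelled as finitely supported sequences A :: nat => 'a,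
   A k being the coefficient of D^k. *)

definition CDS :: "(nat \<Rightarrow> 'a::ab_group_add) set" where
  "CDS = {A. finite {k. A k \<noteq> 0}}"

definition scD :: "(complex \<Rightarrow> 'a \<Rightarrow> 'a) \<Rightarrow> complex \<Rightarrow> (nat \<Rightarrow> 'a) \<Rightarrow> (nat \<Rightarrow> 'a)" where
  "scD sc c A = (\<lambda>k. sc c (A k))"

definition Dpow :: "nat \<Rightarrow> (nat \<Rightarrow> 'a::ab_group_add) \<Rightarrow> (nat \<Rightarrow> 'a)" where
  "Dpow j A = (\<lambda>k. if j \<le> k then A (k - j) else 0)"

definition emb :: "'a::ab_group_add \<Rightarrow> (nat \<Rightarrow> 'a)" where
  "emb u = (\<lambda>k. if k = 0 then u else 0)"

definition is_formula ::
  "(complex \<Rightarrow> 'a::ab_group_add \<Rightarrow> 'a) \<Rightarrow> 'a set \<Rightarrow> 'a set \<Rightarrow> (nat \<Rightarrow> 'a \<Rightarrow> 'a \<Rightarrow> (nat \<Rightarrow> 'a)) \<Rightarrow> bool" where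
  "is_formula sc S0 S1 F \<longleftrightarrow>
     vector_space sc \<and> module.subspace sc S0 \<and> module.subspace sc S1 \<and>
     S0 \<inter> S1 = {0} \<and> (\<forall>x. \<exists>a\<in>S0. \<exists>b\<in>S1. x = a + b) \<and>
     (\<forall>n u u' v. F n (u + u') v = F n u v + F n u' v) \<and>
     (\<forall>n u v v'. F n u (v + v') = F n u v + F n u v') \<and>
     (\<forall>n c u v. F n (sc c u) v = scD sc c (F n u v)) \<and>
     (\<forall>n c u v. F n u (sc c v) = scD sc c (F n u v)) \<and>
     (\<forall>n u v. F n u v \<in> CDS) \<and>
     (\<forall>n u v. (u \<in> S0 \<and> v \<in> S0 \<longrightarrow> (\<forall>k. F n u v k \<in> S0)) \<and>
              (u \<in> S0 \<and> v \<in> S1 \<longrightarrow> (\<forall>k. F n u v k \<in> S1)) \<and>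
              (u \<in> S1 \<and> v \<in> S0 \<longrightarrow> (\<forall>k. F n u v k \<in> S1)) \<and>
              (u \<in> S1 \<and> v \<in> S1 \<longrightarrow> (\<forall>k. F n u v k \<in> S0))) \<and>
     (\<forall>u v. \<exists>N. \<forall>n\<ge>N. F n u v = 0)"

text \<open>(D^a u)_n (D^b v) for u, v in S, computed from
  sum_n (P(D)u)_n(Q(D)v) z^(-n-1) = P(d/dz) Q(D - d/dz) sum_n (u_n v) z^(-n-1):
  (D^a u)_n (D^b v) = sum_j (-1)^a a! C(n,a) C(b,j) j! C(n-a,j) D^(b-j) (u_(n-a-j) v).\<close>
definition prodS ::
  "(complex \<Rightarrow> 'a::ab_group_add \<Rightarrow> 'a) \<Rightarrow> (nat \<Rightarrow> 'a \<Rightarrow> 'a \<Rightarrow> (nat \<Rightarrow> 'a)) \<Rightarrow>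
   nat \<Rightarrow> nat \<Rightarrow> 'a \<Rightarrow> nat \<Rightarrow> 'a \<Rightarrow> (nat \<Rightarrow> 'a)" where
  "prodS sc F n a u b v =
     (\<Sum>j\<le>b. scD sc (of_int ((-1) ^ a * int (fact a * (n choose a) * (b choose j) * fact j * ((n - a) choose j))))
                 (Dpow (b - j) (F (n - a - j) u v)))"

definition prodD ::
  "(complex \<Rightarrow> 'a::ab_group_add \<Rightarrow> 'a) \<Rightarrow> (nat \<Rightarrow> 'a \<Rightarrow> 'a \<Rightarrow> (nat \<Rightarrow> 'a)) \<Rightarrow>
   nat \<Rightarrow> (nat \<Rightarrow> 'a) \<Rightarrow> (nat \<Rightarrow> 'a) \<Rightarrow> (nat \<Rightarrow> 'a)" where
  "prodD sc F n A B = (\<Sum>a\<in>{a. A a \<noteq> 0}. \<Sum>b\<in>{b. B b \<noteq> 0}. prodS sc F n a (A a) b (B b))"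

definition homD :: "'a set \<Rightarrow> 'a set \<Rightarrow> (nat \<Rightarrow> 'a::ab_group_add) \<Rightarrow> bool" where
  "homD S0 S1 A \<longleftrightarrow> A \<in> CDS \<and> ((\<forall>k. A k \<in> S0) \<or> (\<forall>k. A k \<in> S1))"

text \<open>parity sign eps_{A,B} = (-1)^(|A||B|) (for A = 0 or B = 0 its value is irrelevant)\<close>
definition epsD :: "'a set \<Rightarrow> (nat \<Rightarrow> 'a) \<Rightarrow> (nat \<Rightarrow> 'a) \<Rightarrow> complex" where
  "epsD S1 A B = (if (\<forall>k. A k \<in> S1) \<and> (\<forall>k. B k \<in> S1) then -1 else 1)"

definition jacobi_elt where
  "jacobi_elt sc S1 F m n u v w =
     prodD sc F m u (prodD sc F n v w)
     - scD sc (epsD S1 u v) (prodD sc F n v (prodD sc F m u w))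
     - (\<Sum>i\<le>m. scD sc (of_nat (m choose i)) (prodD sc F (n + m - i) (prodD sc F i u v) w))"

definition skew_elt where
  "skew_elt sc S1 F n v w =
     prodD sc F n v w
     + scD sc (epsD S1 v w)
         (\<Sum>k. scD sc ((-1) ^ (n + k) / of_nat (fact k)) (Dpow k (prodD sc F (n + k) w v)))"

definition is_ideal where
  "is_ideal sc F I \<longleftrightarrow> I \<subseteq> CDS \<and> 0 \<in> I \<and>
     (\<forall>X\<in>I. \<forall>Y\<in>I. X + Y \<in> I) \<and> (\<forall>c. \<forall>X\<in>I. scD sc c X \<in> I) \<and>
     (\<forall>A\<in>CDS. \<forall>X\<in>I. \<forall>n. prodD sc F n A X \<in> I \<and> prodD sc F n X A \<in> I)"

definition gen_ideal where
  "gen_ideal sc F G = \<Inter>{I. is_ideal sc F I \<and> G \<subseteq> I}"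

definition jacobi_gens where
  "jacobi_gens sc S0 S1 F =
     {jacobi_elt sc S1 F m n u v w | m n u v w. homD S0 S1 u \<and> homD S0 S1 v \<and> homD S0 S1 w}"

definition skew_gens where
  "skew_gens sc S0 S1 F = {skew_elt sc S1 F n v w | n v w. homD S0 S1 v \<and> homD S0 S1 w}"

definition DCDS :: "(nat \<Rightarrow> 'a::ab_group_add) set" where
  "DCDS = {A \<in> CDS. A 0 = 0}"

end

theory Submission
  imports Defs
begin

lemma fsum_apply: "(sum f S) x = sum (\<lambda>i. f i x) S"
  by (induction S rule: infinite_finite_induct) auto

lemma CDS_iff: "A \<in> CDS \<longleftrightarrow> (\<exists>N. \<forall>k\<ge>N. A k = 0)"
proof
  assume "A \<in> CDS"
  then have "finite {k. A k \<noteq> 0}" by (simp add: CDS_def)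
  then obtain N where "\<forall>k\<in>{k. A k \<noteq> 0}. k < N" using finite_nat_set_iff_bounded by blast
  then show "\<exists>N. \<forall>k\<ge>N. A k = 0" by (metis leD mem_Collect_eq)
next
  assume "\<exists>N. \<forall>k\<ge>N. A k = 0"
  then obtain N where "\<forall>k\<ge>N. A k = 0" by blast
  then have "{k. A k \<noteq> 0} \<subseteq> {..<N}" by (auto simp: not_less[symmetric])
  then show "A \<in> CDS" unfolding CDS_def using finite_subset by blast
qed

lemma CDS_zero[simp]: "0 \<in> CDS" by (simp add: CDS_def)

lemma CDS_add[intro]: "A \<in> CDS \<Longrightarrow> B \<in> CDS \<Longrightarrow> A + B \<in> CDS"
proof -
  assume "A \<in> CDS" "B \<in> CDS"
  then have "finite ({k. A k \<noteq> 0} \<union> {k. B k \<noteq> 0})" by (simp add: CDS_def)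
  moreover have "{k. (A + B) k \<noteq> 0} \<subseteq> {k. A k \<noteq> 0} \<union> {k. B k \<noteq> 0}" by auto
  ultimately show ?thesis unfolding CDS_def using finite_subset by blast
qed

lemma CDS_uminus[intro]: "A \<in> CDS \<Longrightarrow> - A \<in> CDS"
  by (simp add: CDS_def)

lemma CDS_diff[intro]: "A \<in> CDS \<Longrightarrow> B \<in> CDS \<Longrightarrow> A - B \<in> CDS"
  using CDS_add[of A "-B"] by (simp add: CDS_uminus)

lemma CDS_sum[intro]: "(\<And>i. i \<in> S \<Longrightarrow> f i \<in> CDS) \<Longrightarrow> sum f S \<in> CDS"
  by (induction S rule: infinite_finite_induct) auto

lemma CDS_Dpow[intro]: "A \<in> CDS \<Longrightarrow> Dpow j A \<in> CDS"
proof -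
  assume "A \<in> CDS"
  then obtain N where N: "\<forall>k\<ge>N. A k = 0" by (auto simp: CDS_iff)
  have "\<forall>k\<ge>N + j. Dpow j A k = 0" using N by (auto simp: Dpow_def)
  then show ?thesis by (auto simp: CDS_iff)
qed

lemma CDS_emb[intro]: "emb u \<in> CDS"
  unfolding CDS_iff emb_def by (rule exI[of _ 1]) auto

lemma Dpow_0[simp]: "Dpow 0 A = A" by (simp add: Dpow_def)
lemma Dpow_zero[simp]: "Dpow j 0 = 0" by (simp add: Dpow_def fun_eq_iff)
lemma Dpow_add: "Dpow j (A + B) = Dpow j A + Dpow j B" by (simp add: Dpow_def fun_eq_iff)
lemma Dpow_uminus: "Dpow j (- A) = - Dpow j A" by (simp add: Dpow_def fun_eq_iff)
lemma Dpow_diff: "Dpow j (A - B) = Dpow j A - Dpow j B" by (simp add: Dpow_def fun_eq_iff)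
lemma Dpow_sum: "Dpow j (sum f S) = sum (\<lambda>i. Dpow j (f i)) S"
proof (induction S rule: infinite_finite_induct)
  case (infinite A)
  then show ?case by (simp only: sum.infinite[OF infinite] Dpow_zero)
next
  case empty
  then show ?case by (simp only: sum.empty Dpow_zero)
next
  case (insert x F)
  then show ?case by (simp add: Dpow_add del: plus_fun_apply)
qed
lemma Dpow_Suc: "Dpow (Suc k) A = Dpow k (Dpow 1 A)"
  by (auto simp: Dpow_def fun_eq_iff)
lemma Dpow_Suc': "Dpow (Suc k) A = Dpow 1 (Dpow k A)"
  by (auto simp: Dpow_def fun_eq_iff Suc_diff_le)
lemma Dpow_Dpow: "Dpow i (Dpow j A) = Dpow (i + j) A"
  by (auto simp: Dpow_def fun_eq_iff)
lemma Dpow_at0: "Dpow j A 0 = (if j = 0 then A 0 else 0)"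
  by (simp add: Dpow_def)

definition ff :: "nat \<Rightarrow> nat \<Rightarrow> nat" where "ff m k = fact k * (m choose k)"

lemma ff_Suc: "ff m (Suc k) = ff m k * (m - k)"
proof -
  have "Suc k * (m choose Suc k) = (m choose k) * (m - k)"
    by (metis binomial_absorb_comp binomial_absorption mult.commute)
  then have "fact k * (Suc k * (m choose Suc k)) = fact k * ((m choose k) * (m - k))" by simp
  then show ?thesis unfolding ff_def by (simp add: algebra_simps)
qed

lemma ff_split: "fact a * (n choose a) * fact j * ((n - a) choose j) = ff n (a + j)"
proof (cases "a + j \<le> n")
  case True
  have "(n choose (a + j)) * ((a + j) choose a) = (n choose a) * ((n - a) choose j)"
    using choose_mult[of a "a + j" n] True by simp
  moreover have "((a + j) choose a) * fact a * fact j = fact (a + j)"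
    using binomial_fact_lemma[of a "a + j"] by (simp add: algebra_simps)
  ultimately show ?thesis unfolding ff_def
    by (metis (no_types, lifting) mult.assoc mult.commute)
next
  case False
  then have "ff n (a + j) = 0" by (simp add: ff_def)
  moreover have "(n choose a) * ((n - a) choose j) = 0"
    using False by (cases "a \<le> n") auto
  ultimately show ?thesis by (metis mult.commute mult.left_commute mult_0_right)
qed

locale frm =
  fixes sc :: "complex \<Rightarrow> 'a::ab_group_add \<Rightarrow> 'a"
    and S0 S1 :: "'a set"
    and F :: "nat \<Rightarrow> 'a \<Rightarrow> 'a \<Rightarrow> (nat \<Rightarrow> 'a)"
  assumes isf: "is_formula sc S0 S1 F"
begin

lemma vs: "vector_space sc" using isf by (simp add: is_formula_def)

lemma md: "module sc" using vs by (simp add: module_iff_vector_space)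

lemma sub0: "module.subspace sc S0" and sub1: "module.subspace sc S1"
  using isf by (auto simp: is_formula_def)

lemma S01: "S0 \<inter> S1 = {0}" using isf by (simp add: is_formula_def)

lemma decomp: "\<exists>a\<in>S0. \<exists>b\<in>S1. x = a + b" using isf by (simp add: is_formula_def)

lemma sc_add: "sc c (x + y) = sc c x + sc c y" using module.scale_right_distrib[OF md] .
lemma sc_ladd: "sc (c + d) x = sc c x + sc d x" using module.scale_left_distrib[OF md] .
lemma sc_sc: "sc c (sc d x) = sc (c * d) x" using module.scale_scale[OF md] .
lemma sc_one[simp]: "sc 1 x = x" using module.scale_one[OF md] .
lemma sc_zero[simp]: "sc c 0 = 0" using module.scale_zero_right[OF md] .
lemma sc_zero_left[simp]: "sc 0 x = 0" using module.scale_zero_left[OF md] .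
lemma sc_uminus: "sc c (- x) = - sc c x" using module.scale_minus_right[OF md] .
lemma sc_minus_left: "sc (- c) x = - sc c x" using module.scale_minus_left[OF md] .
lemma sc_diff: "sc c (x - y) = sc c x - sc c y" using module.scale_right_diff_distrib[OF md] .
lemma sc_sum: "sc c (sum f A) = (\<Sum>x\<in>A. sc c (f x))" using module.scale_sum_right[OF md] .

lemma S0_0: "0 \<in> S0" using module.subspace_0[OF md sub0] .
lemma S1_0: "0 \<in> S1" using module.subspace_0[OF md sub1] .
lemma S0_add: "x \<in> S0 \<Longrightarrow> y \<in> S0 \<Longrightarrow> x + y \<in> S0" using module.subspace_add[OF md sub0] .
lemma S1_add: "x \<in> S1 \<Longrightarrow> y \<in> S1 \<Longrightarrow> x + y \<in> S1" using module.subspace_add[OF md sub1] .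
lemma S0_sc: "x \<in> S0 \<Longrightarrow> sc c x \<in> S0" using module.subspace_scale[OF md sub0] .
lemma S1_sc: "x \<in> S1 \<Longrightarrow> sc c x \<in> S1" using module.subspace_scale[OF md sub1] .

lemma F_add1: "F n (u + u') v = F n u v + F n u' v" using isf by (simp add: is_formula_def)
lemma F_add2: "F n u (v + v') = F n u v + F n u v'" using isf by (simp add: is_formula_def)
lemma F_sc1: "F n (sc c u) v = scD sc c (F n u v)" using isf by (simp add: is_formula_def)
lemma F_sc2: "F n u (sc c v) = scD sc c (F n u v)" using isf by (simp add: is_formula_def)
lemma F_CDS: "F n u v \<in> CDS" using isf by (simp add: is_formula_def)
lemma F_fin: "\<exists>N. \<forall>n\<ge>N. F n u v = 0" using isf by (simp add: is_formula_def)
lemma F_par: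
  "u \<in> S0 \<Longrightarrow> v \<in> S0 \<Longrightarrow> F n u v k \<in> S0"
  "u \<in> S0 \<Longrightarrow> v \<in> S1 \<Longrightarrow> F n u v k \<in> S1"
  "u \<in> S1 \<Longrightarrow> v \<in> S0 \<Longrightarrow> F n u v k \<in> S1"
  "u \<in> S1 \<Longrightarrow> v \<in> S1 \<Longrightarrow> F n u v k \<in> S0"
  using isf unfolding is_formula_def by blast+

lemma F_zero1[simp]: "F n 0 v = 0"
  using F_add1[of n 0 0 v] by simp
lemma F_zero2[simp]: "F n u 0 = 0"
  using F_add2[of n u 0 0] by simp

lemma scD_apply: "scD sc c A k = sc c (A k)" by (simp add: scD_def)
lemma scD_add: "scD sc c (A + B) = scD sc c A + scD sc c B" by (simp add: scD_def fun_eq_iff sc_add)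
lemma scD_ladd: "scD sc (c + d) A = scD sc c A + scD sc d A" by (simp add: scD_def fun_eq_iff sc_ladd)
lemma scD_scD: "scD sc c (scD sc d A) = scD sc (c * d) A" by (simp add: scD_def fun_eq_iff sc_sc)
lemma scD_one[simp]: "scD sc 1 A = A" by (simp add: scD_def fun_eq_iff)
lemma scD_zero[simp]: "scD sc c 0 = 0" by (simp add: scD_def fun_eq_iff)
lemma scD_zero_left[simp]: "scD sc 0 A = 0" by (simp add: scD_def fun_eq_iff)
lemma scD_uminus: "scD sc c (- A) = - scD sc c A" by (simp add: scD_def fun_eq_iff sc_uminus)
lemma scD_minus_left: "scD sc (- c) A = - scD sc c A" by (simp add: scD_def fun_eq_iff sc_minus_left)
lemma scD_m1: "scD sc (- 1) A = - A" by (simp add: scD_minus_left)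
lemma scD_diff: "scD sc c (A - B) = scD sc c A - scD sc c B" by (simp add: scD_def fun_eq_iff sc_diff)
lemma scD_sum: "scD sc c (sum f S) = sum (\<lambda>i. scD sc c (f i)) S"
proof (induction S rule: infinite_finite_induct)
  case (infinite A)
  then show ?case by (simp only: sum.infinite[OF infinite] scD_zero)
next
  case empty
  then show ?case by (simp only: sum.empty scD_zero)
next
  case (insert x F)
  then show ?case by (simp add: scD_add del: plus_fun_apply)
qed
lemma scD_lsum: "scD sc (sum f S) A = sum (\<lambda>i. scD sc (f i) A) S"
proof (induction S rule: infinite_finite_induct)
  case (infinite A)
  then show ?case by (simp only: sum.infinite[OF infinite] scD_zero_left)
next
  case empty
  then show ?case by (simp only: sum.empty scD_zero_left)
next
  case (insert x F)
  then show ?case by (simp add: scD_ladd del: plus_fun_apply)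
qed
lemma Dpow_scD: "Dpow j (scD sc c A) = scD sc c (Dpow j A)" by (simp add: scD_def Dpow_def fun_eq_iff)

lemma CDS_scD[intro]: "A \<in> CDS \<Longrightarrow> scD sc c A \<in> CDS"
proof -
  assume "A \<in> CDS"
  then have "finite {k. A k \<noteq> 0}" by (simp add: CDS_def)
  moreover have "{k. scD sc c A k \<noteq> 0} \<subseteq> {k. A k \<noteq> 0}" by (auto simp: scD_def)
  ultimately show ?thesis unfolding CDS_def using finite_subset by blast
qed

lemma coef_eq: "(of_int ((-1) ^ a * int (fact a * (n choose a) * (b choose j) * fact j * ((n - a) choose j))) :: complex)
   = (-1) ^ a * of_nat (b choose j) * of_nat (ff n (a + j))"
proof -
  have "fact a * (n choose a) * (b choose j) * fact j * ((n - a) choose j) = (b choose j) * ff n (a + j)"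
    using ff_split[of a n j] by (metis mult.assoc mult.commute mult.left_commute)
  then show ?thesis unfolding \<open>_ = _\<close> by simp
qed

lemma prodS_alt: "prodS sc F n a u b v =
  (\<Sum>j\<le>b. scD sc ((-1) ^ a * of_nat (b choose j) * of_nat (ff n (a + j))) (Dpow (b - j) (F (n - (a + j)) u v)))"
  unfolding prodS_def by (rule sum.cong[OF refl]) (simp only: coef_eq diff_diff_left)

lemma prodS_zero1[simp]: "prodS sc F n a 0 b v = 0"
  unfolding prodS_def by simp
lemma prodS_zero2[simp]: "prodS sc F n a u b 0 = 0"
  unfolding prodS_def by simp

lemma prodS_add1: "prodS sc F n a (u + u') b v = prodS sc F n a u b v + prodS sc F n a u' b v"
  unfolding prodS_def by (simp add: F_add1 Dpow_add scD_add sum.distrib del: plus_fun_apply)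
lemma prodS_add2: "prodS sc F n a u b (v + v') = prodS sc F n a u b v + prodS sc F n a u b v'"
  unfolding prodS_def by (simp add: F_add2 Dpow_add scD_add sum.distrib del: plus_fun_apply)
lemma prodS_sc1: "prodS sc F n a (sc c u) b v = scD sc c (prodS sc F n a u b v)"
  unfolding prodS_def by (simp add: F_sc1 Dpow_scD scD_scD scD_sum mult.commute)
lemma prodS_sc2: "prodS sc F n a u b (sc c v) = scD sc c (prodS sc F n a u b v)"
  unfolding prodS_def by (simp add: F_sc2 Dpow_scD scD_scD scD_sum mult.commute)
lemma prodS_CDS[intro]: "prodS sc F n a u b v \<in> CDS"
  unfolding prodS_def by (intro CDS_sum CDS_scD CDS_Dpow F_CDS)

lemma prodD_range:
  assumes "\<forall>a\<ge>N. A a = 0" "\<forall>b\<ge>M. B b = 0"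
  shows "prodD sc F n A B = (\<Sum>a<N. \<Sum>b<M. prodS sc F n a (A a) b (B b))"
proof -
  have sA: "{a. A a \<noteq> 0} \<subseteq> {..<N}" using assms(1) by (auto simp: not_less[symmetric])
  have sB: "{b. B b \<noteq> 0} \<subseteq> {..<M}" using assms(2) by (auto simp: not_less[symmetric])
  have inner: "(\<Sum>b\<in>{b. B b \<noteq> 0}. prodS sc F n a (A a) b (B b)) = (\<Sum>b<M. prodS sc F n a (A a) b (B b))" for a
    by (rule sum.mono_neutral_left) (use sB in auto)
  have "prodD sc F n A B = (\<Sum>a\<in>{a. A a \<noteq> 0}. \<Sum>b<M. prodS sc F n a (A a) b (B b))"
    unfolding prodD_def using inner by simp
  also have "\<dots> = (\<Sum>a<N. \<Sum>b<M. prodS sc F n a (A a) b (B b))"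
    by (rule sum.mono_neutral_left) (use sA in auto)
  finally show ?thesis .
qed

lemma bound2: "A \<in> CDS \<Longrightarrow> B \<in> CDS \<Longrightarrow> \<exists>N. (\<forall>k\<ge>N. A k = 0) \<and> (\<forall>k\<ge>N. B k = 0)"
proof -
  assume "A \<in> CDS" "B \<in> CDS"
  then obtain N1 N2 where "\<forall>k\<ge>N1. A k = 0" "\<forall>k\<ge>N2. B k = 0" by (auto simp: CDS_iff)
  then show ?thesis by (intro exI[of _ "max N1 N2"]) auto
qed

lemma prodD_zero1[simp]: "prodD sc F n 0 B = 0" by (simp add: prodD_def)
lemma prodD_zero2[simp]: "prodD sc F n A 0 = 0" by (simp add: prodD_def)

lemma prodD_CDS[intro]: "prodD sc F n A B \<in> CDS"
  unfolding prodD_def by (intro CDS_sum prodS_CDS)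

lemma prodD_add1:
  assumes "A \<in> CDS" "A' \<in> CDS" "B \<in> CDS"
  shows "prodD sc F n (A + A') B = prodD sc F n A B + prodD sc F n A' B"
proof -
  obtain N where N: "\<forall>k\<ge>N. A k = 0" "\<forall>k\<ge>N. A' k = 0" using bound2[OF assms(1,2)] by blast
  obtain M where M: "\<forall>k\<ge>M. B k = 0" using assms(3) by (auto simp: CDS_iff)
  have N': "\<forall>k\<ge>N. (A + A') k = 0" using N by simp
  show ?thesis
    unfolding prodD_range[OF N' M] prodD_range[OF N(1) M] prodD_range[OF N(2) M]
    by (simp add: prodS_add1 sum.distrib)
qed

lemma prodD_add2:
  assumes "A \<in> CDS" "B \<in> CDS" "B' \<in> CDS"
  shows "prodD sc F n A (B + B') = prodD sc F n A B + prodD sc F n A B'"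
proof -
  obtain N where N: "\<forall>k\<ge>N. B k = 0" "\<forall>k\<ge>N. B' k = 0" using bound2[OF assms(2,3)] by blast
  obtain M where M: "\<forall>k\<ge>M. A k = 0" using assms(1) by (auto simp: CDS_iff)
  have N': "\<forall>k\<ge>N. (B + B') k = 0" using N by simp
  show ?thesis
    unfolding prodD_range[OF M N'] prodD_range[OF M N(1)] prodD_range[OF M N(2)]
    by (simp add: prodS_add2 sum.distrib)
qed

lemma prodD_sc1:
  assumes "A \<in> CDS" "B \<in> CDS"
  shows "prodD sc F n (scD sc c A) B = scD sc c (prodD sc F n A B)"
proof -
  obtain N where N: "\<forall>k\<ge>N. A k = 0" "\<forall>k\<ge>N. B k = 0" using bound2[OF assms] by blast
  have N': "\<forall>k\<ge>N. scD sc c A k = 0" using N by (simp add: scD_def)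
  show ?thesis
    unfolding prodD_range[OF N' N(2)] prodD_range[OF N(1) N(2)]
    by (simp add: prodS_sc1 scD_sum scD_apply)
qed

lemma prodD_sc2:
  assumes "A \<in> CDS" "B \<in> CDS"
  shows "prodD sc F n A (scD sc c B) = scD sc c (prodD sc F n A B)"
proof -
  obtain N where N: "\<forall>k\<ge>N. A k = 0" "\<forall>k\<ge>N. B k = 0" using bound2[OF assms] by blast
  have N': "\<forall>k\<ge>N. scD sc c B k = 0" using N by (simp add: scD_def)
  show ?thesis
    unfolding prodD_range[OF N(1) N'] prodD_range[OF N(1) N(2)]
    by (simp add: prodS_sc2 scD_sum scD_apply)
qed

lemma prodD_uminus1: "A \<in> CDS \<Longrightarrow> B \<in> CDS \<Longrightarrow> prodD sc F n (- A) B = - prodD sc F n A B"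
  using prodD_sc1[of A B n "-1"] by (simp add: scD_m1)
lemma prodD_uminus2: "A \<in> CDS \<Longrightarrow> B \<in> CDS \<Longrightarrow> prodD sc F n A (- B) = - prodD sc F n A B"
  using prodD_sc2[of A B n "-1"] by (simp add: scD_m1)
lemma prodD_diff1: "A \<in> CDS \<Longrightarrow> A' \<in> CDS \<Longrightarrow> B \<in> CDS \<Longrightarrow>
    prodD sc F n (A - A') B = prodD sc F n A B - prodD sc F n A' B"
  using prodD_add1[of A "-A'" B n] by (simp add: prodD_uminus1 CDS_uminus)
lemma prodD_diff2: "A \<in> CDS \<Longrightarrow> B \<in> CDS \<Longrightarrow> B' \<in> CDS \<Longrightarrow>
    prodD sc F n A (B - B') = prodD sc F n A B - prodD sc F n A B'"
  using prodD_add2[of A B "-B'" n] by (simp add: prodD_uminus2 CDS_uminus)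

lemma prodD_sum1:
  assumes "\<And>i. i \<in> S \<Longrightarrow> f i \<in> CDS" "B \<in> CDS"
  shows "prodD sc F n (sum f S) B = (\<Sum>i\<in>S. prodD sc F n (f i) B)"
  using assms(1)
proof (induction S rule: infinite_finite_induct)
  case (insert x S)
  then show ?case by (simp add: prodD_add1 CDS_sum assms(2) del: plus_fun_apply)
qed simp_all

lemma prodD_sum2:
  assumes "\<And>i. i \<in> S \<Longrightarrow> f i \<in> CDS" "A \<in> CDS"
  shows "prodD sc F n A (sum f S) = (\<Sum>i\<in>S. prodD sc F n A (f i))"
  using assms(1)
proof (induction S rule: infinite_finite_induct)
  case (insert x S)
  then show ?case by (simp add: prodD_add2 CDS_sum assms(2) del: plus_fun_apply)
qed simp_all

lemma prodD_emb: "prodD sc F n (emb u) (emb v) = F n u v"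
proof -
  have b: "\<forall>k\<ge>1. emb u k = 0" "\<forall>k\<ge>1. emb v k = 0" by (auto simp: emb_def)
  show ?thesis unfolding prodD_range[OF b] by (simp add: prodS_def emb_def)
qed

subsection \<open>Sesquilinearity on prodS\<close>

lemma ff_Suc_n: "ff n (Suc p) = n * ff (n - 1) p"
proof -
  have "Suc p * (n choose Suc p) = n * ((n - 1) choose p)" by (rule binomial_absorption)
  then have "fact p * (Suc p * (n choose Suc p)) = fact p * (n * ((n - 1) choose p))" by simp
  then show ?thesis unfolding ff_def by (simp add: algebra_simps)
qed

lemma prodS_alt2: "prodS sc F n a u b v =
  (\<Sum>j\<le>b. scD sc (of_nat (b choose j) * ((-1) ^ a * of_nat (ff n (a + j)))) (Dpow (b - j) (F (n - (a + j)) u v)))"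
  unfolding prodS_alt by (rule sum.cong[OF refl]) (simp add: algebra_simps)

lemma prodS_Da: "prodS sc F n (Suc a) u b v = scD sc (- of_nat n) (prodS sc F (n - 1) a u b v)"
  unfolding prodS_alt2 scD_sum
  by (rule sum.cong[OF refl]) (simp add: scD_scD ff_Suc_n algebra_simps diff_diff_left[symmetric])

lemma pascal_sum:
  "(\<Sum>j\<le>Suc b. scD sc (of_nat (Suc b choose j) * \<phi> j) (\<psi> (Suc b - j) j)) =
   (\<Sum>j\<le>b. scD sc (of_nat (b choose j) * \<phi> j) (\<psi> (Suc b - j) j)) +
   (\<Sum>j\<le>b. scD sc (of_nat (b choose j) * \<phi> (Suc j)) (\<psi> (b - j) (Suc j)))"
proof -
  define t where "t j = scD sc (of_nat (b choose j) * \<phi> j) (\<psi> (Suc b - j) j)" for j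
  have "(\<Sum>j\<le>b. t j) = (\<Sum>j\<le>Suc b. t j)" by (simp add: t_def binomial_eq_0)
  also have "\<dots> = t 0 + (\<Sum>j\<le>b. t (Suc j))" by (rule sum.atMost_Suc_shift)
  finally have e1: "(\<Sum>j\<le>b. t j) = t 0 + (\<Sum>j\<le>b. scD sc (of_nat (b choose Suc j) * \<phi> (Suc j)) (\<psi> (b - j) (Suc j)))"
    by (simp add: t_def)
  have "(\<Sum>j\<le>Suc b. scD sc (of_nat (Suc b choose j) * \<phi> j) (\<psi> (Suc b - j) j)) =
     t 0 + (\<Sum>j\<le>b. scD sc (of_nat (Suc b choose Suc j) * \<phi> (Suc j)) (\<psi> (b - j) (Suc j)))"
    by (subst sum.atMost_Suc_shift) (simp add: t_def)
  also have "\<dots> = t 0 + ((\<Sum>j\<le>b. scD sc (of_nat (b choose j) * \<phi> (Suc j)) (\<psi> (b - j) (Suc j))) +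
       (\<Sum>j\<le>b. scD sc (of_nat (b choose Suc j) * \<phi> (Suc j)) (\<psi> (b - j) (Suc j))))"
    by (simp add: scD_ladd sum.distrib algebra_simps del: plus_fun_apply)
  finally have c: "(\<Sum>j\<le>Suc b. scD sc (of_nat (Suc b choose j) * \<phi> j) (\<psi> (Suc b - j) j)) =
     t 0 + ((\<Sum>j\<le>b. scD sc (of_nat (b choose j) * \<phi> (Suc j)) (\<psi> (b - j) (Suc j))) +
       (\<Sum>j\<le>b. scD sc (of_nat (b choose Suc j) * \<phi> (Suc j)) (\<psi> (b - j) (Suc j))))" .
  have d: "(\<Sum>j\<le>b. scD sc (of_nat (b choose j) * \<phi> j) (\<psi> (Suc b - j) j)) = (\<Sum>j\<le>b. t j)"
    by (simp only: t_def)
  show ?thesis unfolding c d e1 by (simp only: add_ac)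
qed

lemma prodS_Leibniz: "Dpow 1 (prodS sc F n a u b v) = prodS sc F n (Suc a) u b v + prodS sc F n a u (Suc b) v"
proof -
  define \<phi> where "\<phi> j = ((-1) ^ a * of_nat (ff n (a + j)) :: complex)" for j
  define \<psi> where "\<psi> i j = Dpow i (F (n - (a + j)) u v)" for i j
  have e: "prodS sc F n a u (Suc b) v = (\<Sum>j\<le>Suc b. scD sc (of_nat (Suc b choose j) * \<phi> j) (\<psi> (Suc b - j) j))"
    unfolding prodS_alt2 \<phi>_def \<psi>_def ..
  have e1: "(\<Sum>j\<le>b. scD sc (of_nat (b choose j) * \<phi> j) (\<psi> (Suc b - j) j)) = Dpow 1 (prodS sc F n a u b v)"
    unfolding prodS_alt2 Dpow_sum Dpow_scD \<phi>_def \<psi>_def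
    by (rule sum.cong[OF refl]) (simp add: Dpow_Dpow Suc_diff_le)
  have e2: "(\<Sum>j\<le>b. scD sc (of_nat (b choose j) * \<phi> (Suc j)) (\<psi> (b - j) (Suc j))) = - prodS sc F n (Suc a) u b v"
    unfolding prodS_alt2 \<phi>_def \<psi>_def sum_negf[symmetric]
    by (rule sum.cong[OF refl]) (simp add: scD_minus_left[symmetric])
  show ?thesis using pascal_sum[of b \<phi> \<psi>] unfolding e[symmetric] e1 e2 by simp
qed

lemma shift_sum: "(\<And>b. g b 0 = 0) \<Longrightarrow> (\<Sum>a<Suc N. g a (Dpow 1 A a)) = (\<Sum>a<N. g (Suc a) (A a))"
  by (subst sum.lessThan_Suc_shift) (simp add: Dpow_def)

lemma prodD_D1:
  assumes "A \<in> CDS" "B \<in> CDS"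
  shows "prodD sc F n (Dpow 1 A) B = scD sc (- of_nat n) (prodD sc F (n - 1) A B)"
proof -
  obtain N where N: "\<forall>k\<ge>N. A k = 0" "\<forall>k\<ge>N. B k = 0" using bound2[OF assms] by blast
  have N': "\<forall>k\<ge>Suc N. Dpow 1 A k = 0" using N by (auto simp: Dpow_def)
  have "prodD sc F n (Dpow 1 A) B = (\<Sum>a<Suc N. (\<lambda>a x. \<Sum>b<N. prodS sc F n a x b (B b)) a (Dpow 1 A a))"
    unfolding prodD_range[OF N' N(2)] ..
  also have "\<dots> = (\<Sum>a<N. \<Sum>b<N. prodS sc F n (Suc a) (A a) b (B b))"
    by (rule shift_sum) (simp only: prodS_zero1 sum.neutral_const)
  also have "\<dots> = scD sc (- of_nat n) (prodD sc F (n - 1) A B)"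
    unfolding prodD_range[OF N(1) N(2)] scD_sum prodS_Da ..
  finally show ?thesis .
qed

lemma prodD_Leibniz:
  assumes "A \<in> CDS" "B \<in> CDS"
  shows "Dpow 1 (prodD sc F n A B) = prodD sc F n (Dpow 1 A) B + prodD sc F n A (Dpow 1 B)"
proof -
  obtain N where N: "\<forall>k\<ge>N. A k = 0" "\<forall>k\<ge>N. B k = 0" using bound2[OF assms] by blast
  have NA: "\<forall>k\<ge>Suc N. Dpow 1 A k = 0" using N by (auto simp: Dpow_def)
  have NB: "\<forall>k\<ge>Suc N. Dpow 1 B k = 0" using N by (auto simp: Dpow_def)
  have e1: "prodD sc F n (Dpow 1 A) B = (\<Sum>a<N. \<Sum>b<N. prodS sc F n (Suc a) (A a) b (B b))"
  proof -
    have "prodD sc F n (Dpow 1 A) B = (\<Sum>a<Suc N. (\<lambda>a x. \<Sum>b<N. prodS sc F n a x b (B b)) a (Dpow 1 A a))"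
      unfolding prodD_range[OF NA N(2)] ..
    also have "\<dots> = (\<Sum>a<N. \<Sum>b<N. prodS sc F n (Suc a) (A a) b (B b))"
      by (rule shift_sum) (simp only: prodS_zero1 sum.neutral_const)
    finally show ?thesis .
  qed
  have e2: "prodD sc F n A (Dpow 1 B) = (\<Sum>a<N. \<Sum>b<N. prodS sc F n a (A a) (Suc b) (B b))"
  proof -
    have "prodD sc F n A (Dpow 1 B) = (\<Sum>a<N. \<Sum>b<Suc N. (\<lambda>b x. prodS sc F n a (A a) b x) b (Dpow 1 B b))"
      unfolding prodD_range[OF N(1) NB] ..
    also have "\<dots> = (\<Sum>a<N. \<Sum>b<N. prodS sc F n a (A a) (Suc b) (B b))"
      by (rule sum.cong[OF refl], rule shift_sum) (simp only: prodS_zero2)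
    finally show ?thesis .
  qed
  show ?thesis
    unfolding e1 e2 prodD_range[OF N(1) N(2)] Dpow_sum prodS_Leibniz sum.distrib ..
qed

lemma prodD_Dk:
  assumes "A \<in> CDS" "B \<in> CDS"
  shows "prodD sc F n (Dpow k A) B = scD sc ((-1) ^ k * of_nat (ff n k)) (prodD sc F (n - k) A B)"
  using assms(1)
proof (induction k arbitrary: A)
  case 0
  then show ?case by (simp add: ff_def)
next
  case (Suc k)
  have "prodD sc F n (Dpow (Suc k) A) B = prodD sc F n (Dpow k (Dpow 1 A)) B" by (simp only: Dpow_Suc)
  also have "\<dots> = scD sc ((-1) ^ k * of_nat (ff n k)) (prodD sc F (n - k) (Dpow 1 A) B)"
    using Suc.IH[of "Dpow 1 A"] Suc.prems by (simp add: CDS_Dpow)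
  also have "\<dots> = scD sc ((-1) ^ k * of_nat (ff n k)) (scD sc (- of_nat (n - k)) (prodD sc F (n - k - 1) A B))"
    using prodD_D1[OF Suc.prems assms(2)] by simp
  also have "\<dots> = scD sc ((-1) ^ Suc k * of_nat (ff n (Suc k))) (prodD sc F (n - Suc k) A B)"
    by (simp add: scD_scD ff_Suc mult_ac)
  finally show ?case .
qed

definition cls :: "bool \<Rightarrow> 'a set" where "cls p = (if p then S1 else S0)"
definition par :: "bool \<Rightarrow> (nat \<Rightarrow> 'a) \<Rightarrow> bool" where "par p A \<longleftrightarrow> (\<forall>k. A k \<in> cls p)"

lemma cls_0[simp]: "0 \<in> cls p" by (simp add: cls_def S0_0 S1_0)
lemma cls_add: "x \<in> cls p \<Longrightarrow> y \<in> cls p \<Longrightarrow> x + y \<in> cls p" by (auto simp: cls_def S0_add S1_add)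
lemma cls_sc: "x \<in> cls p \<Longrightarrow> sc c x \<in> cls p" by (auto simp: cls_def S0_sc S1_sc)
lemma cls_uminus: "x \<in> cls p \<Longrightarrow> - x \<in> cls p" using cls_sc[of x p "-1"] by (simp add: sc_minus_left)

lemma par_0[simp]: "par p 0" by (simp add: par_def)
lemma par_add: "par p A \<Longrightarrow> par p B \<Longrightarrow> par p (A + B)" by (simp add: par_def cls_add)
lemma par_scD: "par p A \<Longrightarrow> par p (scD sc c A)" by (simp add: par_def scD_def cls_sc)
lemma par_uminus: "par p A \<Longrightarrow> par p (- A)" by (simp add: par_def cls_uminus)
lemma par_diff: "par p A \<Longrightarrow> par p B \<Longrightarrow> par p (A - B)"
  using par_add[of p A "- B"] par_uminus[of p B] by simp
lemma par_Dpow: "par p A \<Longrightarrow> par p (Dpow j A)" by (simp add: par_def Dpow_def)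
lemma par_sum: "(\<And>i. i \<in> S \<Longrightarrow> par p (f i)) \<Longrightarrow> par p (sum f S)"
proof (induction S rule: infinite_finite_induct)
  case (infinite A)
  then show ?case by (simp only: sum.infinite[OF infinite(1)] par_0)
next
  case empty
  then show ?case by (simp only: sum.empty par_0)
next
  case (insert x F)
  then show ?case by (simp add: par_add del: plus_fun_apply)
qed
lemma par_Sum_any: "(\<And>i. par p (f i)) \<Longrightarrow> par p (Sum_any f)"
  unfolding Sum_any.expand_set by (rule par_sum) simp

lemma F_cls: "u \<in> cls p \<Longrightarrow> v \<in> cls q \<Longrightarrow> F n u v k \<in> cls (p \<noteq> q)"
  by (cases p; cases q) (auto simp: cls_def F_par)

lemma prodS_par: assumes "u \<in> cls p" "v \<in> cls q" shows "par (p \<noteq> q) (prodS sc F n a u b v)"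
  unfolding prodS_def by (intro par_sum par_scD par_Dpow) (unfold par_def, blast intro: F_cls assms)

lemma prodD_par: "par p A \<Longrightarrow> par q B \<Longrightarrow> par (p \<noteq> q) (prodD sc F n A B)"
  unfolding prodD_def by (intro par_sum prodS_par) (auto simp: par_def)

lemma homD_iff: "homD S0 S1 A \<longleftrightarrow> A \<in> CDS \<and> (\<exists>p. par p A)"
  unfolding homD_def par_def cls_def by (metis (full_types))

lemma cls_inter: "x \<in> cls p \<Longrightarrow> x \<in> cls (\<not> p) \<Longrightarrow> x = 0"
  using S01 by (cases p) (auto simp: cls_def)

lemma decompD:
  assumes "A \<in> CDS"
  shows "\<exists>A0 A1. A = A0 + A1 \<and> A0 \<in> CDS \<and> A1 \<in> CDS \<and> par False A0 \<and> par True A1"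
proof -
  define e where "e x = (SOME a. a \<in> S0 \<and> (\<exists>b\<in>S1. x = a + b))" for x
  have e: "e x \<in> S0 \<and> x - e x \<in> S1" for x
  proof -
    have "\<exists>a. a \<in> S0 \<and> (\<exists>b\<in>S1. x = a + b)" using decomp by blast
    then have "e x \<in> S0 \<and> (\<exists>b\<in>S1. x = e x + b)" unfolding e_def by (rule someI_ex)
    then show ?thesis by (metis add_diff_cancel_left')
  qed
  have e0: "e 0 = 0"
  proof -
    have "e 0 \<in> S0" "- e 0 \<in> S1" using e[of 0] by auto
    then have "e 0 \<in> S1" using module.subspace_neg[OF md sub1] by fastforce
    then show ?thesis using \<open>e 0 \<in> S0\<close> S01 by blast
  qed
  define A0 where "A0 k = e (A k)" for k
  define A1 where "A1 k = A k - e (A k)" for k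
  have "A = A0 + A1" by (simp add: A0_def A1_def fun_eq_iff)
  moreover have "A0 \<in> CDS" "A1 \<in> CDS" using assms unfolding CDS_iff A0_def A1_def
    by (metis diff_zero e0)+
  moreover have "par False A0" "par True A1" using e by (auto simp: par_def cls_def A0_def A1_def)
  ultimately show ?thesis by blast
qed

lemma epsD_sym: "epsD S1 X Y = epsD S1 Y X" by (auto simp: epsD_def)
lemma epsD_sq: "epsD S1 X Y * epsD S1 X Y = 1" by (simp add: epsD_def)
lemma epsD_D1: "epsD S1 (Dpow j X) Y = epsD S1 X Y"
proof -
  have "(\<forall>k. Dpow j X k \<in> S1) \<longleftrightarrow> (\<forall>k. X k \<in> S1)"
  proof
    assume h: "\<forall>k. Dpow j X k \<in> S1"
    show "\<forall>k. X k \<in> S1"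
    proof
      fix k show "X k \<in> S1" using h[rule_format, of "k + j"] by (simp add: Dpow_def)
    qed
  qed (simp add: Dpow_def S1_0)
  then show ?thesis by (simp add: epsD_def)
qed
lemma epsD_D2: "epsD S1 X (Dpow j Y) = epsD S1 X Y"
  using epsD_D1 epsD_sym by metis

lemma CDS_Sum_any[intro]: "(\<And>i. f i \<in> CDS) \<Longrightarrow> Sum_any f \<in> CDS"
  unfolding Sum_any.expand_set by (rule CDS_sum) simp

lemma CDS_ideal: "is_ideal sc F CDS"
  unfolding is_ideal_def by auto

lemma gen_ideal_ideal: "G \<subseteq> CDS \<Longrightarrow> is_ideal sc F (gen_ideal sc F G)"
  unfolding gen_ideal_def is_ideal_def by (auto 4 3)

lemma gen_ideal_sub: "G \<subseteq> gen_ideal sc F G" unfolding gen_ideal_def by auto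
lemma gen_ideal_least: "is_ideal sc F I \<Longrightarrow> G \<subseteq> I \<Longrightarrow> gen_ideal sc F G \<subseteq> I"
  unfolding gen_ideal_def by auto
lemma gen_ideal_mono: "G \<subseteq> G' \<Longrightarrow> gen_ideal sc F G \<subseteq> gen_ideal sc F G'"
  unfolding gen_ideal_def by auto

lemma ideal_uminus: "is_ideal sc F I \<Longrightarrow> X \<in> I \<Longrightarrow> - X \<in> I"
  unfolding is_ideal_def by (metis scD_m1)
lemma ideal_diff: "is_ideal sc F I \<Longrightarrow> X \<in> I \<Longrightarrow> Y \<in> I \<Longrightarrow> X - Y \<in> I"
  using ideal_uminus[of I Y] unfolding is_ideal_def by (metis diff_conv_add_uminus)
lemma ideal_sum: "is_ideal sc F I \<Longrightarrow> (\<And>i. i \<in> S \<Longrightarrow> f i \<in> I) \<Longrightarrow> sum f S \<in> I"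
proof (induction S rule: infinite_finite_induct)
  case (infinite A)
  have "sum f A = 0" using infinite(1) by (rule sum.infinite)
  then show ?case using infinite(2) unfolding is_ideal_def by (simp only:)
next
  case empty
  then show ?case unfolding is_ideal_def by (simp only: sum.empty)
next
  case (insert x S)
  then show ?case unfolding is_ideal_def by (simp del: plus_fun_apply)
qed
lemma ideal_Sum_any: "is_ideal sc F I \<Longrightarrow> (\<And>i. f i \<in> I) \<Longrightarrow> Sum_any f \<in> I"
  unfolding Sum_any.expand_set by (rule ideal_sum) simp_all
lemma ideal_CDS: "is_ideal sc F I \<Longrightarrow> X \<in> I \<Longrightarrow> X \<in> CDS"
  unfolding is_ideal_def by auto
lemma ideal_scD: "is_ideal sc F I \<Longrightarrow> X \<in> I \<Longrightarrow> scD sc c X \<in> I"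
  unfolding is_ideal_def by auto
lemma ideal_add: "is_ideal sc F I \<Longrightarrow> X \<in> I \<Longrightarrow> Y \<in> I \<Longrightarrow> X + Y \<in> I"
  unfolding is_ideal_def by auto
lemma ideal_prod1: "is_ideal sc F I \<Longrightarrow> A \<in> CDS \<Longrightarrow> X \<in> I \<Longrightarrow> prodD sc F n A X \<in> I"
  unfolding is_ideal_def by auto
lemma ideal_prod2: "is_ideal sc F I \<Longrightarrow> A \<in> CDS \<Longrightarrow> X \<in> I \<Longrightarrow> prodD sc F n X A \<in> I"
  unfolding is_ideal_def by auto

lemma jacobi_CDS: "jacobi_elt sc S1 F m n u v w \<in> CDS"
  unfolding jacobi_elt_def by (intro CDS_diff CDS_sum CDS_scD prodD_CDS)
lemma skew_CDS: "skew_elt sc S1 F n v w \<in> CDS"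
  unfolding skew_elt_def by (intro CDS_add CDS_Sum_any CDS_scD CDS_Dpow prodD_CDS)
lemma gens_CDS: "jacobi_gens sc S0 S1 F \<subseteq> CDS" "skew_gens sc S0 S1 F \<subseteq> CDS"
  unfolding jacobi_gens_def skew_gens_def using jacobi_CDS skew_CDS by auto

lemma CDS_simps[simp]: "prodD sc F n A B \<in> CDS" "A \<in> CDS \<Longrightarrow> Dpow j A \<in> CDS"
  "A \<in> CDS \<Longrightarrow> scD sc c A \<in> CDS"
  by auto

subsection \<open>D-closure of the Jacobi ideal\<close>

abbreviation "JI \<equiv> gen_ideal sc F (jacobi_gens sc S0 S1 F)"

lemma JI_ideal: "is_ideal sc F JI" by (rule gen_ideal_ideal[OF gens_CDS(1)])

lemma homD_D: "homD S0 S1 X \<Longrightarrow> homD S0 S1 (Dpow 1 X)"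
  unfolding homD_iff using par_Dpow by auto

lemma jacobi_D:
  assumes "X \<in> CDS" "Y \<in> CDS" "Z \<in> CDS"
  shows "Dpow 1 (jacobi_elt sc S1 F m n X Y Z) = jacobi_elt sc S1 F m n (Dpow 1 X) Y Z
     + jacobi_elt sc S1 F m n X (Dpow 1 Y) Z + jacobi_elt sc S1 F m n X Y (Dpow 1 Z)"
proof -
  note L = prodD_Leibniz[simplified]
  show ?thesis
  unfolding jacobi_elt_def using assms
  by (simp add: Dpow_diff Dpow_add Dpow_scD Dpow_sum L prodD_add1 prodD_add2 scD_add sum.distrib
      epsD_D1[of 1, simplified] epsD_D2[of _ 1, simplified] algebra_simps del: plus_fun_apply)
qed

lemma JI_gen: "homD S0 S1 X \<Longrightarrow> homD S0 S1 Y \<Longrightarrow> homD S0 S1 Z \<Longrightarrow> jacobi_elt sc S1 F m n X Y Z \<in> JI"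
  using gen_ideal_sub[of "jacobi_gens sc S0 S1 F"] unfolding jacobi_gens_def by blast

lemma JI_gen_D: "homD S0 S1 X \<Longrightarrow> homD S0 S1 Y \<Longrightarrow> homD S0 S1 Z \<Longrightarrow>
   Dpow k (jacobi_elt sc S1 F m n X Y Z) \<in> JI"
proof (induction k arbitrary: X Y Z)
  case 0
  then show ?case by (simp add: JI_gen)
next
  case (Suc k)
  have C: "X \<in> CDS" "Y \<in> CDS" "Z \<in> CDS" using Suc.prems by (auto simp: homD_def)
  have "Dpow (Suc k) (jacobi_elt sc S1 F m n X Y Z) = Dpow k (Dpow 1 (jacobi_elt sc S1 F m n X Y Z))"
    by (rule Dpow_Suc)
  also have "\<dots> = Dpow k (jacobi_elt sc S1 F m n (Dpow 1 X) Y Z) + Dpow k (jacobi_elt sc S1 F m n X (Dpow 1 Y) Z)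
       + Dpow k (jacobi_elt sc S1 F m n X Y (Dpow 1 Z))"
    by (simp only: jacobi_D[OF C] Dpow_add)
  also have "\<dots> \<in> JI"
  proof -
    have "Dpow k (jacobi_elt sc S1 F m n (Dpow 1 X) Y Z) \<in> JI"
      using Suc.IH[OF homD_D[OF Suc.prems(1)] Suc.prems(2,3)] .
    moreover have "Dpow k (jacobi_elt sc S1 F m n X (Dpow 1 Y) Z) \<in> JI"
      using Suc.IH[OF Suc.prems(1) homD_D[OF Suc.prems(2)] Suc.prems(3)] .
    moreover have "Dpow k (jacobi_elt sc S1 F m n X Y (Dpow 1 Z)) \<in> JI"
      using Suc.IH[OF Suc.prems(1,2) homD_D[OF Suc.prems(3)]] .
    ultimately show ?thesis by (intro ideal_add[OF JI_ideal])
  qed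
  finally show ?case .
qed

definition DI :: "(nat \<Rightarrow> 'a) set" where "DI = {X. \<forall>k. Dpow k X \<in> JI}"

lemma DI_JI: "X \<in> DI \<Longrightarrow> X \<in> JI"
proof -
  assume "X \<in> DI"
  then have "Dpow 0 X \<in> JI" unfolding DI_def by blast
  then show ?thesis by (simp only: Dpow_0)
qed

lemma DI_prod:
  "A \<in> CDS \<Longrightarrow> X \<in> DI \<Longrightarrow> Dpow k (prodD sc F n A X) \<in> JI \<and> Dpow k (prodD sc F n X A) \<in> JI"
proof (induction k arbitrary: A X)
  case 0
  have "X \<in> JI" using DI_JI[OF 0(2)] .
  then show ?case unfolding Dpow_0
    using ideal_prod1[OF JI_ideal 0(1)] ideal_prod2[OF JI_ideal 0(1)] by blast
next
  case (Suc k)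
  have XC: "X \<in> CDS" using ideal_CDS[OF JI_ideal DI_JI[OF Suc.prems(2)]] .
  have DX: "Dpow 1 X \<in> DI"
  proof -
    have "\<forall>k. Dpow k X \<in> JI" using Suc.prems(2) unfolding DI_def by blast
    then have "\<forall>k. Dpow k (Dpow 1 X) \<in> JI" unfolding Dpow_Dpow by blast
    then show ?thesis unfolding DI_def by blast
  qed
  have e1: "Dpow (Suc k) (prodD sc F n A X) = Dpow k (prodD sc F n (Dpow 1 A) X) + Dpow k (prodD sc F n A (Dpow 1 X))"
    by (subst Dpow_Suc) (simp only: prodD_Leibniz[OF Suc.prems(1) XC] Dpow_add)
  have e2: "Dpow (Suc k) (prodD sc F n X A) = Dpow k (prodD sc F n (Dpow 1 X) A) + Dpow k (prodD sc F n X (Dpow 1 A))"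
    by (subst Dpow_Suc) (simp only: prodD_Leibniz[OF XC Suc.prems(1)] Dpow_add)
  have DA: "Dpow 1 A \<in> CDS" using Suc.prems(1) by (rule CDS_Dpow)
  have a: "Dpow k (prodD sc F n (Dpow 1 A) X) \<in> JI \<and> Dpow k (prodD sc F n X (Dpow 1 A)) \<in> JI"
    using Suc.IH[OF DA Suc.prems(2)] .
  have b: "Dpow k (prodD sc F n A (Dpow 1 X)) \<in> JI \<and> Dpow k (prodD sc F n (Dpow 1 X) A) \<in> JI"
    using Suc.IH[OF Suc.prems(1) DX] .
  show ?case unfolding e1 e2 using a b ideal_add[OF JI_ideal] by blast
qed

lemma DI_ideal: "is_ideal sc F DI"
  unfolding is_ideal_def
proof (intro conjI ballI allI subsetI)
  fix X assume "X \<in> DI"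
  then show "X \<in> CDS" using ideal_CDS[OF JI_ideal DI_JI] by blast
next
  show "0 \<in> DI" unfolding DI_def using JI_ideal by (simp add: is_ideal_def)
next
  fix X Y assume "X \<in> DI" "Y \<in> DI"
  then show "X + Y \<in> DI" unfolding DI_def by (simp add: Dpow_add ideal_add[OF JI_ideal] del: plus_fun_apply)
next
  fix c X assume "X \<in> DI"
  then show "scD sc c X \<in> DI" unfolding DI_def by (simp add: Dpow_scD ideal_scD[OF JI_ideal])
next
  fix A X :: "nat \<Rightarrow> 'a" and n assume "A \<in> CDS" "X \<in> DI"
  then have "Dpow k (prodD sc F n A X) \<in> JI \<and> Dpow k (prodD sc F n X A) \<in> JI" for k
    using DI_prod by blast
  then show "prodD sc F n A X \<in> DI" "prodD sc F n X A \<in> DI"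
    unfolding DI_def by blast+
qed

lemma JI_DI: "JI \<subseteq> DI"
proof (rule gen_ideal_least[OF DI_ideal])
  show "jacobi_gens sc S0 S1 F \<subseteq> DI"
  proof
    fix x assume "x \<in> jacobi_gens sc S0 S1 F"
    then obtain m n u v w where "x = jacobi_elt sc S1 F m n u v w" "homD S0 S1 u" "homD S0 S1 v" "homD S0 S1 w"
      unfolding jacobi_gens_def by blast
    then show "x \<in> DI" unfolding DI_def using JI_gen_D by blast
  qed
qed

lemma JI_Dpow: "X \<in> JI \<Longrightarrow> Dpow k X \<in> JI"
  using JI_DI unfolding DI_def by blast

end



context frm
begin

lemma prodS_fin: "\<exists>M. \<forall>n\<ge>M. prodS sc F n a u b v = 0"
proof -
  obtain N0 where N0: "\<forall>n\<ge>N0. F n u v = 0" using F_fin by blast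
  have "\<forall>n\<ge>N0 + a + b. prodS sc F n a u b v = 0"
  proof (intro allI impI)
    fix n assume "N0 + a + b \<le> n"
    then have "\<forall>j\<le>b. F (n - (a + j)) u v = 0" using N0 by auto
    then show "prodS sc F n a u b v = 0" unfolding prodS_alt by simp
  qed
  then show ?thesis by blast
qed

lemma prodD_fin:
  assumes "A \<in> CDS" "B \<in> CDS"
  shows "\<exists>M. \<forall>n\<ge>M. prodD sc F n A B = 0"
proof -
  obtain N where N: "\<forall>k\<ge>N. A k = 0" "\<forall>k\<ge>N. B k = 0" using bound2[OF assms] by blast
  have "\<forall>p\<in>{..<N}\<times>{..<N}. eventually (\<lambda>n. prodS sc F n (fst p) (A (fst p)) (snd p) (B (snd p)) = 0) sequentially"
    using prodS_fin unfolding eventually_sequentially by blast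
  then have "eventually (\<lambda>n. \<forall>p\<in>{..<N}\<times>{..<N}. prodS sc F n (fst p) (A (fst p)) (snd p) (B (snd p)) = 0) sequentially"
    by (intro eventually_ball_finite) auto
  then have "eventually (\<lambda>n. prodD sc F n A B = 0) sequentially"
    by eventually_elim (simp add: prodD_range[OF N])
  then show ?thesis unfolding eventually_sequentially .
qed

lemma prodD_Sum_any1:
  assumes "finite {k. g k \<noteq> 0}" "\<And>k. g k \<in> CDS" "Z \<in> CDS"
  shows "prodD sc F m (Sum_any g) Z = Sum_any (\<lambda>k. prodD sc F m (g k) Z)"
proof -
  have "prodD sc F m (Sum_any g) Z = (\<Sum>k\<in>{k. g k \<noteq> 0}. prodD sc F m (g k) Z)"
    unfolding Sum_any.expand_set by (rule prodD_sum1) (use assms in auto)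
  also have "\<dots> = Sum_any (\<lambda>k. prodD sc F m (g k) Z)"
    by (rule Sum_any.expand_superset[symmetric]) (use assms in auto)
  finally show ?thesis .
qed

lemma skew_fin: 
  assumes "X \<in> CDS" "Y \<in> CDS"
  shows "finite {k. scD sc (c k) (Dpow k (prodD sc F (n + k) Y X)) \<noteq> 0}"
proof -
  obtain M where M: "\<forall>p\<ge>M. prodD sc F p Y X = 0" using prodD_fin[OF assms(2,1)] by blast
  have "{k. scD sc (c k) (Dpow k (prodD sc F (n + k) Y X)) \<noteq> 0} \<subseteq> {..<M}"
    using M by (auto simp: not_less[symmetric])
  then show ?thesis using finite_subset by blast
qed

subsection \<open>Right annihilation\<close>

definition XP where "XP X Y Z n a b = (\<Sum>k\<le>a. scD sc (of_nat (a choose k)) (prodD sc F (a - k + b) (prodD sc F (n + k) X Y) Z))"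
definition YP where "YP X Y Z n a b = (\<Sum>k\<le>b. scD sc (of_nat (b choose k)) (prodD sc F (a + (b - k)) (prodD sc F (n + k) Y X) Z))"
definition Wt where "Wt X Y Z n a b = XP X Y Z n a b + scD sc (epsD S1 X Y * (-1) ^ n) (YP X Y Z n a b)"

lemma pascal_shift: "(\<Sum>k\<le>Suc a. scD sc (of_nat (Suc a choose k)) (h (Suc a - k) k)) =
  (\<Sum>k\<le>a. scD sc (of_nat (a choose k)) (h (Suc a - k) k)) + (\<Sum>k\<le>a. scD sc (of_nat (a choose k)) (h (a - k) (Suc k)))"
  using pascal_sum[of a "\<lambda>_. 1" h] by simp

lemma XP_Suc: "XP X Y Z n (Suc a) b = XP X Y Z n a (Suc b) + XP X Y Z (Suc n) a b"
proof -
  have "XP X Y Z n (Suc a) b = (\<Sum>k\<le>Suc a. scD sc (of_nat (Suc a choose k)) ((\<lambda>i k. prodD sc F (i + b) (prodD sc F (n + k) X Y) Z) (Suc a - k) k))"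
    unfolding XP_def ..
  also have "\<dots> = (\<Sum>k\<le>a. scD sc (of_nat (a choose k)) (prodD sc F (Suc a - k + b) (prodD sc F (n + k) X Y) Z))
     + (\<Sum>k\<le>a. scD sc (of_nat (a choose k)) (prodD sc F (a - k + b) (prodD sc F (n + Suc k) X Y) Z))"
    by (rule pascal_shift)
  also have "\<dots> = XP X Y Z n a (Suc b) + XP X Y Z (Suc n) a b"
    unfolding XP_def by (intro arg_cong2[where f="(+)"] sum.cong refl) (auto simp: Suc_diff_le)
  finally show ?thesis .
qed

lemma YP_Suc: "YP X Y Z n a (Suc b) = YP X Y Z n (Suc a) b + YP X Y Z (Suc n) a b"
proof -
  have "YP X Y Z n a (Suc b) = (\<Sum>k\<le>Suc b. scD sc (of_nat (Suc b choose k)) ((\<lambda>i k. prodD sc F (a + i) (prodD sc F (n + k) Y X) Z) (Suc b - k) k))"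
    unfolding YP_def ..
  also have "\<dots> = (\<Sum>k\<le>b. scD sc (of_nat (b choose k)) (prodD sc F (a + (Suc b - k)) (prodD sc F (n + k) Y X) Z))
     + (\<Sum>k\<le>b. scD sc (of_nat (b choose k)) (prodD sc F (a + (b - k)) (prodD sc F (n + Suc k) Y X) Z))"
    by (rule pascal_shift)
  also have "\<dots> = YP X Y Z n (Suc a) b + YP X Y Z (Suc n) a b"
    unfolding YP_def by (intro arg_cong2[where f="(+)"] sum.cong refl) (auto simp: Suc_diff_le)
  finally show ?thesis .
qed

lemma Wt_Suc: "Wt X Y Z (Suc n) a b = Wt X Y Z n (Suc a) b - Wt X Y Z n a (Suc b)"
proof -
  have x: "XP X Y Z (Suc n) a b = XP X Y Z n (Suc a) b - XP X Y Z n a (Suc b)" using XP_Suc by (simp add: algebra_simps)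
  have y: "YP X Y Z (Suc n) a b = YP X Y Z n a (Suc b) - YP X Y Z n (Suc a) b" using YP_Suc by (simp add: algebra_simps)
  show ?thesis unfolding Wt_def x y
    by (simp add: scD_diff scD_minus_left algebra_simps del: plus_fun_apply)
qed

lemma Wt_0:
  "Wt X Y Z 0 a b = - (jacobi_elt sc S1 F a b X Y Z + scD sc (epsD S1 X Y) (jacobi_elt sc S1 F b a Y X Z))"
proof -
  have s: "epsD S1 Y X = epsD S1 X Y" by (rule epsD_sym)
  have x: "XP X Y Z 0 a b = (\<Sum>i\<le>a. scD sc (of_nat (a choose i)) (prodD sc F (b + a - i) (prodD sc F i X Y) Z))"
    unfolding XP_def by (intro sum.cong refl) (auto simp: add.commute)
  have y: "YP X Y Z 0 a b = (\<Sum>i\<le>b. scD sc (of_nat (b choose i)) (prodD sc F (a + b - i) (prodD sc F i Y X) Z))"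
    unfolding YP_def by (intro sum.cong refl) auto
  show ?thesis unfolding Wt_def x y jacobi_elt_def s
    by (simp add: scD_diff scD_add scD_scD epsD_sq algebra_simps del: plus_fun_apply)
qed

lemma Wt_in:
  assumes "homD S0 S1 X" "homD S0 S1 Y" "homD S0 S1 Z"
  shows "Wt X Y Z n a b \<in> JI"
proof (induction n arbitrary: a b)
  case 0
  have "jacobi_elt sc S1 F a b X Y Z \<in> JI" "jacobi_elt sc S1 F b a Y X Z \<in> JI"
    using JI_gen assms by blast+
  then show ?case unfolding Wt_0
    by (intro ideal_uminus[OF JI_ideal] ideal_add[OF JI_ideal] ideal_scD[OF JI_ideal])
next
  case (Suc n)
  then show ?case unfolding Wt_Suc by (intro ideal_diff[OF JI_ideal])
qed

lemma coef_skew: "((-1) ^ (n + k) / of_nat (fact k) * ((-1) ^ k * of_nat (ff m k)) :: complex)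
   = (-1) ^ n * of_nat (m choose k)"
proof -
  have "((-1) ^ (n + k) * (-1) ^ k :: complex) = (-1) ^ n"
    by (simp add: power_add mult.assoc power_mult_distrib[symmetric])
  moreover have "(of_nat (fact k) :: complex) \<noteq> 0" by simp
  ultimately show ?thesis unfolding ff_def by (simp add: field_simps)
qed

lemma skew_right:
  assumes "X \<in> CDS" "Y \<in> CDS" "Z \<in> CDS"
  shows "prodD sc F m (skew_elt sc S1 F n X Y) Z = Wt X Y Z n 0 m"
proof -
  define g where "g k = scD sc ((-1) ^ (n + k) / of_nat (fact k)) (Dpow k (prodD sc F (n + k) Y X))" for k
  have gfin: "finite {k. g k \<noteq> 0}" unfolding g_def by (rule skew_fin[OF assms(1,2)])
  have gC: "g k \<in> CDS" for k unfolding g_def by simp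
  have "prodD sc F m (Sum_any g) Z = Sum_any (\<lambda>k. prodD sc F m (g k) Z)"
    by (rule prodD_Sum_any1[OF gfin gC assms(3)])
  also have "\<dots> = Sum_any (\<lambda>k. scD sc ((-1) ^ n * of_nat (m choose k)) (prodD sc F (m - k) (prodD sc F (n + k) Y X) Z))"
  proof (rule Sum_any.cong)
    fix k
    have B: "prodD sc F (n + k) Y X \<in> CDS" by simp
    have "prodD sc F m (g k) Z = scD sc ((-1) ^ (n + k) / of_nat (fact k)) (prodD sc F m (Dpow k (prodD sc F (n + k) Y X)) Z)"
      unfolding g_def by (rule prodD_sc1) (simp_all add: assms)
    also have "\<dots> = scD sc ((-1) ^ (n + k) / of_nat (fact k) * ((-1) ^ k * of_nat (ff m k))) (prodD sc F (m - k) (prodD sc F (n + k) Y X) Z)"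
      unfolding prodD_Dk[OF B assms(3)] scD_scD ..
    finally show "prodD sc F m (g k) Z = scD sc ((-1) ^ n * of_nat (m choose k)) (prodD sc F (m - k) (prodD sc F (n + k) Y X) Z)"
      unfolding coef_skew .
  qed
  also have "\<dots> = (\<Sum>k\<le>m. scD sc ((-1) ^ n * of_nat (m choose k)) (prodD sc F (m - k) (prodD sc F (n + k) Y X) Z))"
    by (rule Sum_any.expand_superset) (auto simp: binomial_eq_0 not_le[symmetric])
  also have "\<dots> = scD sc ((-1) ^ n) (YP X Y Z n 0 m)"
    unfolding YP_def scD_sum by (simp add: scD_scD)
  finally have e: "prodD sc F m (Sum_any g) Z = scD sc ((-1) ^ n) (YP X Y Z n 0 m)" .
  have x: "XP X Y Z n 0 m = prodD sc F m (prodD sc F n X Y) Z" unfolding XP_def by simp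
  have sk: "skew_elt sc S1 F n X Y = prodD sc F n X Y + scD sc (epsD S1 X Y) (Sum_any g)"
    unfolding skew_elt_def g_def ..
  have SC: "Sum_any g \<in> CDS" using gC by (rule CDS_Sum_any)
  have "prodD sc F m (skew_elt sc S1 F n X Y) Z = prodD sc F m (prodD sc F n X Y) Z + scD sc (epsD S1 X Y) (prodD sc F m (Sum_any g) Z)"
    unfolding sk using assms SC by (simp add: prodD_add1 prodD_sc1)
  then show ?thesis unfolding Wt_def x e scD_scD .
qed

lemma skew_right_JI:
  assumes "homD S0 S1 X" "homD S0 S1 Y" "homD S0 S1 Z"
  shows "prodD sc F m (skew_elt sc S1 F n X Y) Z \<in> JI"
  using assms Wt_in skew_right by (simp add: homD_def)

lemma skew_par:
  assumes "par p X" "par q Y"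
  shows "par (p \<noteq> q) (skew_elt sc S1 F n X Y)"
proof -
  have pq: "(q \<noteq> p) = (p \<noteq> q)" by blast
  have "par (p \<noteq> q) (prodD sc F k Y X)" for k using prodD_par[OF assms(2,1)] unfolding pq .
  then show ?thesis unfolding skew_elt_def
    by (intro par_add[OF prodD_par[OF assms]] par_scD par_Sum_any par_Dpow)
qed

lemma homD_skew: "homD S0 S1 X \<Longrightarrow> homD S0 S1 Y \<Longrightarrow> homD S0 S1 (skew_elt sc S1 F n X Y)"
  unfolding homD_iff using skew_par skew_CDS by blast

definition closedL :: "(nat \<Rightarrow> 'a) set \<Rightarrow> bool" where
  "closedL T \<longleftrightarrow> skew_gens sc S0 S1 F \<subseteq> T \<and> 0 \<in> T \<and> (\<forall>x\<in>T. \<forall>y\<in>T. x + y \<in> T) \<and> (\<forall>c. \<forall>x\<in>T. scD sc c x \<in> T)"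

definition Lset :: "(nat \<Rightarrow> 'a) set" where "Lset = \<Inter>{T. closedL T}"

lemma Lset_least: "closedL T \<Longrightarrow> Lset \<subseteq> T" unfolding Lset_def by blast

lemma Lskew: "homD S0 S1 X \<Longrightarrow> homD S0 S1 Y \<Longrightarrow> skew_elt sc S1 F n X Y \<in> Lset"
  unfolding Lset_def closedL_def skew_gens_def by blast
lemma Lzero: "0 \<in> Lset" unfolding Lset_def closedL_def by blast
lemma Ladd: "Q \<in> Lset \<Longrightarrow> Q' \<in> Lset \<Longrightarrow> Q + Q' \<in> Lset" unfolding Lset_def closedL_def by blast
lemma LscD: "Q \<in> Lset \<Longrightarrow> scD sc c Q \<in> Lset" unfolding Lset_def closedL_def by blast

lemma Lset_CDS: "Q \<in> Lset \<Longrightarrow> Q \<in> CDS"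
proof -
  have "closedL CDS" unfolding closedL_def using gens_CDS(2) by auto
  then show "Q \<in> Lset \<Longrightarrow> Q \<in> CDS" using Lset_least by blast
qed

lemma homD_parts: "par False A0 \<Longrightarrow> A0 \<in> CDS \<Longrightarrow> homD S0 S1 A0"
  "par True A1 \<Longrightarrow> A1 \<in> CDS \<Longrightarrow> homD S0 S1 A1"
  unfolding homD_iff by blast+

lemma Lset_right: "Q \<in> Lset \<Longrightarrow> A \<in> CDS \<Longrightarrow> prodD sc F m Q A \<in> JI"
proof -
  define T where "T = {Q. Q \<in> CDS \<and> (\<forall>A\<in>CDS. \<forall>m. prodD sc F m Q A \<in> JI)}"
  have "closedL T" unfolding closedL_def
  proof (intro conjI ballI allI subsetI)
    fix x assume "x \<in> skew_gens sc S0 S1 F"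
    then obtain X Y n where x: "x = skew_elt sc S1 F n X Y" "homD S0 S1 X" "homD S0 S1 Y"
      unfolding skew_gens_def by blast
    have "prodD sc F m x A \<in> JI" if A: "A \<in> CDS" for A m
    proof -
      obtain A0 A1 where d: "A = A0 + A1" "A0 \<in> CDS" "A1 \<in> CDS" "par False A0" "par True A1"
        using decompD[OF A] by blast
      have "prodD sc F m x A = prodD sc F m x A0 + prodD sc F m x A1"
        unfolding d(1) by (rule prodD_add2) (use d skew_CDS x in auto)
      also have "\<dots> \<in> JI"
        using skew_right_JI[OF x(2,3) homD_parts(1)[OF d(4,2)]] skew_right_JI[OF x(2,3) homD_parts(2)[OF d(5,3)]]
        unfolding x(1) by (rule ideal_add[OF JI_ideal])
      finally show ?thesis .
    qed
    then show "x \<in> T" unfolding T_def using x skew_CDS by blast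
  next
    show "0 \<in> T" unfolding T_def using JI_ideal by (simp add: is_ideal_def)
  next
    fix x y assume "x \<in> T" "y \<in> T"
    then show "x + y \<in> T" unfolding T_def
      by (auto simp: prodD_add1 ideal_add[OF JI_ideal] CDS_add simp del: plus_fun_apply)
  next
    fix c x assume "x \<in> T"
    then show "scD sc c x \<in> T" unfolding T_def
      by (auto simp: prodD_sc1 ideal_scD[OF JI_ideal] CDS_scD)
  qed
  then show "Q \<in> Lset \<Longrightarrow> A \<in> CDS \<Longrightarrow> prodD sc F m Q A \<in> JI"
    using Lset_least unfolding T_def by blast
qed

definition K :: "(nat \<Rightarrow> 'a) set" where "K = {P + Q | P Q. P \<in> JI \<and> Q \<in> Lset}"

lemma K_JI: "P \<in> JI \<Longrightarrow> P \<in> K"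
proof -
  assume "P \<in> JI"
  moreover have "P = P + 0" by simp
  ultimately show ?thesis unfolding K_def using Lzero by blast
qed
lemma K_L: "Q \<in> Lset \<Longrightarrow> Q \<in> K"
proof -
  assume "Q \<in> Lset"
  moreover have "Q = 0 + Q" by simp
  moreover have "0 \<in> JI" using JI_ideal by (simp add: is_ideal_def)
  ultimately show ?thesis unfolding K_def by blast
qed
lemma K_add: "X \<in> K \<Longrightarrow> Y \<in> K \<Longrightarrow> X + Y \<in> K"
proof -
  assume "X \<in> K" "Y \<in> K"
  then obtain P Q P' Q' where "X = P + Q" "Y = P' + Q'" "P \<in> JI" "P' \<in> JI" "Q \<in> Lset" "Q' \<in> Lset"
    unfolding K_def by blast
  moreover have "(P + Q) + (P' + Q') = (P + P') + (Q + Q')" by (simp add: algebra_simps del: plus_fun_apply)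
  ultimately show ?thesis unfolding K_def using ideal_add[OF JI_ideal] Ladd by blast
qed
lemma K_scD: "X \<in> K \<Longrightarrow> scD sc c X \<in> K"
proof -
  assume "X \<in> K"
  then obtain P Q where "X = P + Q" "P \<in> JI" "Q \<in> Lset" unfolding K_def by blast
  then show ?thesis unfolding K_def using ideal_scD[OF JI_ideal] LscD scD_add by blast
qed
lemma K_CDS: "X \<in> K \<Longrightarrow> X \<in> CDS"
  unfolding K_def using ideal_CDS[OF JI_ideal] Lset_CDS by blast

lemma skew_left_hom:
  assumes "homD S0 S1 Z" "homD S0 S1 X" "homD S0 S1 Y" and Sd: "S = skew_elt sc S1 F n X Y"
  shows "prodD sc F m Z S \<in> K"
proof -
  have hS: "homD S0 S1 S" unfolding Sd using homD_skew assms(2,3) .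
  define g where "g k = scD sc ((-1) ^ (m + k) / of_nat (fact k)) (Dpow k (prodD sc F (m + k) S Z))" for k
  have gJ: "g k \<in> JI" for k
  proof -
    have "prodD sc F (m + k) S Z \<in> JI" unfolding Sd by (rule skew_right_JI[OF assms(2,3,1)])
    then show ?thesis unfolding g_def by (intro ideal_scD[OF JI_ideal] JI_Dpow)
  qed
  have sk: "skew_elt sc S1 F m Z S = prodD sc F m Z S + scD sc (epsD S1 Z S) (Sum_any g)"
    unfolding skew_elt_def g_def ..
  have "prodD sc F m Z S = - scD sc (epsD S1 Z S) (Sum_any g) + skew_elt sc S1 F m Z S"
    unfolding sk by (simp add: algebra_simps del: plus_fun_apply)
  moreover have "- scD sc (epsD S1 Z S) (Sum_any g) \<in> JI"
    using gJ by (intro ideal_uminus[OF JI_ideal] ideal_scD[OF JI_ideal] ideal_Sum_any[OF JI_ideal])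
  moreover have "skew_elt sc S1 F m Z S \<in> Lset" by (rule Lskew[OF assms(1) hS])
  ultimately show ?thesis unfolding K_def by blast
qed

lemma Lset_left: "Q \<in> Lset \<Longrightarrow> A \<in> CDS \<Longrightarrow> prodD sc F m A Q \<in> K"
proof -
  define T where "T = {Q. Q \<in> CDS \<and> (\<forall>A\<in>CDS. \<forall>m. prodD sc F m A Q \<in> K)}"
  have "closedL T" unfolding closedL_def
  proof (intro conjI ballI allI subsetI)
    fix x assume "x \<in> skew_gens sc S0 S1 F"
    then obtain X Y n where x: "x = skew_elt sc S1 F n X Y" "homD S0 S1 X" "homD S0 S1 Y"
      unfolding skew_gens_def by blast
    have "prodD sc F m A x \<in> K" if A: "A \<in> CDS" for A m
    proof -
      obtain A0 A1 where d: "A = A0 + A1" "A0 \<in> CDS" "A1 \<in> CDS" "par False A0" "par True A1"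
        using decompD[OF A] by blast
      have "prodD sc F m A x = prodD sc F m A0 x + prodD sc F m A1 x"
        unfolding d(1) by (rule prodD_add1) (use d skew_CDS x in auto)
      also have "\<dots> \<in> K"
        using skew_left_hom[OF homD_parts(1)[OF d(4,2)] x(2,3) x(1)] skew_left_hom[OF homD_parts(2)[OF d(5,3)] x(2,3) x(1)]
        by (rule K_add)
      finally show ?thesis .
    qed
    then show "x \<in> T" unfolding T_def using x skew_CDS by blast
  next
    show "0 \<in> T" unfolding T_def using K_JI JI_ideal by (simp add: is_ideal_def)
  next
    fix x y assume "x \<in> T" "y \<in> T"
    then show "x + y \<in> T" unfolding T_def
      by (auto simp: prodD_add2 K_add CDS_add simp del: plus_fun_apply)
  next
    fix c x assume "x \<in> T"
    then show "scD sc c x \<in> T" unfolding T_def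
      by (auto simp: prodD_sc2 K_scD CDS_scD)
  qed
  then show "Q \<in> Lset \<Longrightarrow> A \<in> CDS \<Longrightarrow> prodD sc F m A Q \<in> K"
    using Lset_least unfolding T_def by blast
qed

lemma K_ideal: "is_ideal sc F K"
  unfolding is_ideal_def
proof (intro conjI ballI allI subsetI)
  fix X assume "X \<in> K" then show "X \<in> CDS" by (rule K_CDS)
next
  show "0 \<in> K" using K_JI JI_ideal by (simp add: is_ideal_def)
next
  fix X Y assume "X \<in> K" "Y \<in> K" then show "X + Y \<in> K" by (rule K_add)
next
  fix c X assume "X \<in> K" then show "scD sc c X \<in> K" by (rule K_scD)
next
  fix A X :: "nat \<Rightarrow> 'a" and n assume A: "A \<in> CDS" and "X \<in> K"
  then obtain P Q where X: "X = P + Q" "P \<in> JI" "Q \<in> Lset" unfolding K_def by blast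
  have PC: "P \<in> CDS" using ideal_CDS[OF JI_ideal X(2)] .
  have QC: "Q \<in> CDS" using Lset_CDS[OF X(3)] .
  have "prodD sc F n A X = prodD sc F n A P + prodD sc F n A Q"
    unfolding X(1) using A PC QC by (rule prodD_add2)
  also have "\<dots> \<in> K"
    using K_JI[OF ideal_prod1[OF JI_ideal A X(2)]] Lset_left[OF X(3) A] by (rule K_add)
  finally show "prodD sc F n A X \<in> K" .
  have "prodD sc F n X A = prodD sc F n P A + prodD sc F n Q A"
    unfolding X(1) using PC QC A by (rule prodD_add1)
  also have "\<dots> \<in> K"
    using ideal_add[OF JI_ideal ideal_prod2[OF JI_ideal A X(2)] Lset_right[OF X(3) A]] by (rule K_JI)
  finally show "prodD sc F n X A \<in> K" .
qed

lemma big_sub_K: "gen_ideal sc F (jacobi_gens sc S0 S1 F \<union> skew_gens sc S0 S1 F) \<subseteq> K"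
proof (rule gen_ideal_least[OF K_ideal])
  show "jacobi_gens sc S0 S1 F \<union> skew_gens sc S0 S1 F \<subseteq> K"
  proof
    fix x assume "x \<in> jacobi_gens sc S0 S1 F \<union> skew_gens sc S0 S1 F"
    then show "x \<in> K"
    proof
      assume "x \<in> jacobi_gens sc S0 S1 F"
      then show "x \<in> K" using gen_ideal_sub K_JI by blast
    next
      assume "x \<in> skew_gens sc S0 S1 F"
      then show "x \<in> K" unfolding skew_gens_def using Lskew K_L by blast
    qed
  qed
qed

subsection \<open>Constant terms\<close>

lemma skew_at0:
  assumes "X \<in> CDS" "Y \<in> CDS"
  shows "skew_elt sc S1 F n X Y 0 = prodD sc F n X Y 0 + sc (epsD S1 X Y * (-1) ^ n) (prodD sc F n Y X 0)"
proof -
  define g where "g k = scD sc ((-1) ^ (n + k) / of_nat (fact k)) (Dpow k (prodD sc F (n + k) Y X))" for k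
  have gfin: "finite {k. g k \<noteq> 0}" unfolding g_def by (rule skew_fin[OF assms(1,2)])
  define v where "v = sc ((-1) ^ n) (prodD sc F n Y X 0)"
  have gk: "g k 0 = (if k = 0 then v else 0)" for k
    unfolding g_def v_def by (simp add: scD_apply Dpow_at0)
  have "(Sum_any g) 0 = (\<Sum>k\<in>{k. g k \<noteq> 0}. g k 0)"
    unfolding Sum_any.expand_set fsum_apply ..
  also have "\<dots> = (if 0 \<in> {k. g k \<noteq> 0} then v else 0)"
    unfolding gk using gfin by (simp add: sum.delta)
  also have "\<dots> = v"
    using gk[of 0] by auto
  finally have e: "(Sum_any g) 0 = v" .
  have sk: "skew_elt sc S1 F n X Y = prodD sc F n X Y + scD sc (epsD S1 X Y) (Sum_any g)"
    unfolding skew_elt_def g_def ..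
  show ?thesis unfolding sk by (simp add: scD_apply e v_def sc_sc)
qed

lemma prodS_at0: "prodS sc F n a u b v 0 = sc ((-1) ^ a * of_nat (ff n (a + b))) (F (n - (a + b)) u v 0)"
proof -
  have "prodS sc F n a u b v 0 = (\<Sum>j\<le>b. sc (of_nat (b choose j) * ((-1) ^ a * of_nat (ff n (a + j)))) (Dpow (b - j) (F (n - (a + j)) u v) 0))"
    unfolding prodS_alt2 fsum_apply scD_apply ..
  also have "\<dots> = (\<Sum>j\<le>b. if j = b then sc (of_nat (b choose j) * ((-1) ^ a * of_nat (ff n (a + j)))) (F (n - (a + j)) u v 0) else 0)"
    by (intro sum.cong refl) (auto simp: Dpow_at0)
  also have "\<dots> = sc ((-1) ^ a * of_nat (ff n (a + b))) (F (n - (a + b)) u v 0)"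
    by (simp add: sum.delta')
  finally show ?thesis .
qed

lemma prodD_at0:
  assumes "\<forall>a\<ge>N. A a = 0" "\<forall>b\<ge>N. B b = 0"
  shows "prodD sc F n A B 0 = (\<Sum>a<N. \<Sum>b<N. prodS sc F n a (A a) b (B b) 0)"
  unfolding prodD_range[OF assms] fsum_apply ..

lemma emb_S1: "(\<forall>k. emb u k \<in> S1) \<longleftrightarrow> u \<in> S1"
  unfolding emb_def using S1_0 by (metis (full_types))

lemma eps_comp:
  assumes "homD S0 S1 X" "X a \<noteq> 0"
  shows "(\<forall>k. emb (X a) k \<in> S1) \<longleftrightarrow> (\<forall>k. X k \<in> S1)"
proof -
  have "(\<forall>k. X k \<in> S0) \<or> (\<forall>k. X k \<in> S1)" using assms(1) by (simp add: homD_def)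
  then show ?thesis unfolding emb_S1 using assms(2) S01 by blast
qed

lemma comp_S01: "homD S0 S1 X \<Longrightarrow> X a \<in> S0 \<union> S1"
  unfolding homD_def by blast

definition Hyp where "Hyp \<longleftrightarrow> (\<forall>u v n. u \<in> S0 \<union> S1 \<and> v \<in> S0 \<union> S1 \<longrightarrow>
               prodD sc F n (emb u) (emb v)
               + scD sc (epsD S1 (emb u) (emb v) * (-1) ^ n) (prodD sc F n (emb v) (emb u)) \<in> DCDS)"

lemma Hyp_D:
  assumes "Hyp" "u \<in> S0 \<union> S1" "v \<in> S0 \<union> S1"
  shows "F n u v 0 + sc (epsD S1 (emb u) (emb v) * (-1) ^ n) (F n v u 0) = 0"
proof -
  have "prodD sc F n (emb u) (emb v) + scD sc (epsD S1 (emb u) (emb v) * (-1) ^ n) (prodD sc F n (emb v) (emb u)) \<in> DCDS"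
    using assms unfolding Hyp_def by blast
  then show ?thesis unfolding DCDS_def prodD_emb by (simp add: scD_apply)
qed

lemma term_zero:
  assumes H: "Hyp" and hX: "homD S0 S1 X" and hY: "homD S0 S1 Y"
  shows "prodS sc F n a (X a) b (Y b) 0 + sc (epsD S1 X Y * (-1) ^ n) (prodS sc F n b (Y b) a (X a) 0) = 0"
proof (cases "a + b \<le> n")
  case False
  then have "ff n (a + b) = 0" "ff n (b + a) = 0" by (auto simp: ff_def binomial_eq_0)
  then show ?thesis unfolding prodS_at0 by simp
next
  case True
  define p where "p = n - (a + b)"
  have np: "n = p + a + b" using True p_def by simp
  show ?thesis
  proof (cases "X a = 0 \<or> Y b = 0")
    case True
    then show ?thesis unfolding prodS_at0 by auto
  next
    case False
    then have nz: "X a \<noteq> 0" "Y b \<noteq> 0" by auto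
    have ee: "epsD S1 (emb (X a)) (emb (Y b)) = epsD S1 X Y"
      unfolding epsD_def eps_comp[OF hX nz(1)] eps_comp[OF hY nz(2)] ..
    have h: "F p (X a) (Y b) 0 + sc (epsD S1 X Y * (-1) ^ p) (F p (Y b) (X a) 0) = 0"
      using Hyp_D[OF H comp_S01[OF hX, of a] comp_S01[OF hY, of b], of p] unfolding ee .
    have pw: "(-1::complex) ^ n * (-1) ^ b = (-1) ^ a * (-1) ^ p"
    proof -
      have "(-1::complex) ^ n * (-1) ^ b = (-1) ^ p * (-1) ^ a * ((-1) ^ b * (-1) ^ b)"
        unfolding np power_add by (simp add: mult_ac)
      also have "(-1::complex) ^ b * (-1) ^ b = 1" by (simp add: power_mult_distrib[symmetric])
      finally show ?thesis by simp
    qed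
    have cc: "epsD S1 X Y * (-1) ^ n * ((-1) ^ b * of_nat (ff n (a + b))) =
       ((-1) ^ a * of_nat (ff n (a + b))) * (epsD S1 X Y * (-1) ^ p)"
      using pw by (simp add: mult_ac)
    have "prodS sc F n a (X a) b (Y b) 0 + sc (epsD S1 X Y * (-1) ^ n) (prodS sc F n b (Y b) a (X a) 0)
        = sc ((-1) ^ a * of_nat (ff n (a + b))) (F p (X a) (Y b) 0 + sc (epsD S1 X Y * (-1) ^ p) (F p (Y b) (X a) 0))"
    proof -
      have e1: "prodS sc F n b (Y b) a (X a) 0 = sc ((-1) ^ b * of_nat (ff n (a + b))) (F p (Y b) (X a) 0)"
        unfolding prodS_at0 p_def by (simp add: add.commute)
      have e2: "prodS sc F n a (X a) b (Y b) 0 = sc ((-1) ^ a * of_nat (ff n (a + b))) (F p (X a) (Y b) 0)"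
        unfolding prodS_at0 p_def ..
      show ?thesis unfolding e1 e2 sc_sc sc_add cc ..
    qed
    then show ?thesis unfolding h by simp
  qed
qed

lemma skew_zero:
  assumes H: "Hyp" and hX: "homD S0 S1 X" and hY: "homD S0 S1 Y"
  shows "skew_elt sc S1 F n X Y 0 = 0"
proof -
  have C: "X \<in> CDS" "Y \<in> CDS" using hX hY by (auto simp: homD_def)
  obtain N where N: "\<forall>k\<ge>N. X k = 0" "\<forall>k\<ge>N. Y k = 0" using bound2[OF C] by blast
  have "skew_elt sc S1 F n X Y 0 = (\<Sum>a<N. \<Sum>b<N. prodS sc F n a (X a) b (Y b) 0) +
      sc (epsD S1 X Y * (-1) ^ n) (\<Sum>b<N. \<Sum>a<N. prodS sc F n b (Y b) a (X a) 0)"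
    unfolding skew_at0[OF C] prodD_at0[OF N] prodD_at0[OF N(2,1)] ..
  also have "\<dots> = (\<Sum>a<N. \<Sum>b<N. prodS sc F n a (X a) b (Y b) 0 + sc (epsD S1 X Y * (-1) ^ n) (prodS sc F n b (Y b) a (X a) 0))"
    by (subst sum.swap[of _ _ "{..<N}"]) (simp add: sc_sum sum.distrib)
  also have "\<dots> = 0" using term_zero[OF H hX hY] by simp
  finally show ?thesis .
qed

lemma Lset_DCDS: "Hyp \<Longrightarrow> Lset \<subseteq> DCDS"
proof -
  assume H: Hyp
  have "closedL DCDS" unfolding closedL_def DCDS_def
  proof (intro conjI ballI allI subsetI)
    fix x assume "x \<in> skew_gens sc S0 S1 F"
    then show "x \<in> {A \<in> CDS. A 0 = 0}" unfolding skew_gens_def using skew_zero[OF H] skew_CDS by blast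
  qed (auto simp: scD_apply)
  then show ?thesis by (rule Lset_least)
qed

lemma K_DCDS: "Hyp \<Longrightarrow> JI \<subseteq> DCDS \<Longrightarrow> K \<subseteq> DCDS"
proof
  fix x assume H: Hyp and J: "JI \<subseteq> DCDS" and "x \<in> K"
  then obtain P Q where x: "x = P + Q" "P \<in> JI" "Q \<in> Lset" unfolding K_def by blast
  have "P \<in> DCDS" "Q \<in> DCDS" using x J Lset_DCDS[OF H] by blast+
  then show "x \<in> DCDS" unfolding x(1) DCDS_def by auto
qed

lemma homD_emb: "u \<in> S0 \<union> S1 \<Longrightarrow> homD S0 S1 (emb u)"
  unfolding homD_def emb_def using S0_0 S1_0 CDS_emb[of u] unfolding emb_def by auto

end

theorem proposition7p8:
  fixes sc :: "complex \<Rightarrow> 'a::ab_group_add \<Rightarrow> 'a"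
    and S0 S1 :: "'a set"
    and F :: "nat \<Rightarrow> 'a \<Rightarrow> 'a \<Rightarrow> (nat \<Rightarrow> 'a)"
  assumes "is_formula sc S0 S1 F"
  shows "(gen_ideal sc F (jacobi_gens sc S0 S1 F \<union> skew_gens sc S0 S1 F) \<subseteq> DCDS \<longleftrightarrow>
            gen_ideal sc F (jacobi_gens sc S0 S1 F) \<subseteq> DCDS \<and>
            (\<forall>u v n. u \<in> S0 \<union> S1 \<and> v \<in> S0 \<union> S1 \<longrightarrow>
               prodD sc F n (emb u) (emb v)
               + scD sc (epsD S1 (emb u) (emb v) * (-1) ^ n) (prodD sc F n (emb v) (emb u)) \<in> DCDS))
       \<and> (gen_ideal sc F (jacobi_gens sc S0 S1 F \<union> skew_gens sc S0 S1 F) \<subseteq> DCDS \<longrightarrow>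
            (\<forall>u. emb u \<in> gen_ideal sc F (jacobi_gens sc S0 S1 F \<union> skew_gens sc S0 S1 F) \<longrightarrow> u = 0))"
proof -
  interpret frm sc S0 S1 F using assms by unfold_locales
  let ?B = "gen_ideal sc F (jacobi_gens sc S0 S1 F \<union> skew_gens sc S0 S1 F)"
  have fwd: "JI \<subseteq> DCDS \<and> Hyp" if B: "?B \<subseteq> DCDS"
  proof
    show "JI \<subseteq> DCDS" using B gen_ideal_mono[of "jacobi_gens sc S0 S1 F"] by blast
    show Hyp unfolding Hyp_def
    proof (intro allI impI)
      fix u v n assume uv: "u \<in> S0 \<union> S1 \<and> v \<in> S0 \<union> S1"
      have "skew_elt sc S1 F n (emb u) (emb v) \<in> skew_gens sc S0 S1 F"
        unfolding skew_gens_def using homD_emb uv by blast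
      then have "skew_elt sc S1 F n (emb u) (emb v) \<in> ?B" using gen_ideal_sub by blast
      then have "skew_elt sc S1 F n (emb u) (emb v) 0 = 0" using B unfolding DCDS_def by blast
      then show "prodD sc F n (emb u) (emb v)
               + scD sc (epsD S1 (emb u) (emb v) * (-1) ^ n) (prodD sc F n (emb v) (emb u)) \<in> DCDS"
        unfolding DCDS_def skew_at0[OF CDS_emb CDS_emb] by (simp add: scD_apply CDS_add CDS_scD)
    qed
  qed
  have bwd: "?B \<subseteq> DCDS" if "JI \<subseteq> DCDS" "Hyp"
    using big_sub_K K_DCDS[OF that(2,1)] by blast
  have inj: "u = 0" if "?B \<subseteq> DCDS" "emb u \<in> ?B" for u
  proof -
    have "emb u 0 = 0" using that unfolding DCDS_def by blast
    then show ?thesis by (simp add: emb_def)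
  qed
  show ?thesis using fwd bwd inj unfolding Hyp_def by blast
qed

end
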